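(* Under the setting of the merge junction with link $I_1=[a_1,b_1]$ whose fundamental diagram satisfies (F), capacities $C_1,C_3>0$, split $\eta_1\in(0,1)$, cycle $\Delta_A>0$, fixed data $N_{ini},N_{up}$, and assuming no spillback ($S_3(t)\equiv C_3$), the Lax–Hopf solutions $N^{\Delta_A}$ and $N^0$ on $I_1$ with data $(N_{ini},N_{up},N^{\Delta_A}_{down})$ and $(N_{ini},N_{up},N^0_{down})$ satisfy, for all $(t,x)\in[0,T]\times[a_1,b_1]$, $$\big|N^{\Delta_A}(t,x)-N^0(t,x)\big|\le \eta_1(1-\eta_1)\Delta_A\min\{C_1,C_3\}\le\tfrac14\Delta_A\min\{C_1,C_3\}.$$
   Context: Assumption (F): $f:[0,\rho_j]\to[0,C]$ continuous and concave, $f(0)=f(\rho_j)=0$, $C=\max f$; $v=f'(0+)$, $-w=f'(\rho_j-)$ finite; $f^*(u)=\sup_{\rho\in[0,\rho_j]}\{f(\rho)-u\rho\}$, $u\in[-w,v]$. Lax–Hopf solution on $[a,b]$ with data $(N_{ini},N_{up},N_{down})$: with $\mathcal{C}(0,x)=N_{ini}(x)$, $\mathcal{C}(s,a)=N_{up}(s)$, $\mathcal{C}(s,b)=N_{down}(s)$ (minimum at corners), $\mathcal{C}=+\infty$ elsewhere, set $N(t,x)=\inf_{u\in[-w,v],\tau\ge0}\{\mathcal{C}(t-\tau,x-\tau u)+\tau f^*(u)\}$. Signal control: $u_1:[0,T]\to\{0,1\}$ is $\Delta_A$-periodic and, for some offset $\theta$, $u_1(t)=1$ iff $(t-\theta)\bmod\Delta_A\in[0,\eta_1\Delta_A)$.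 Effective supply: $\mathcal{S}_3^1(t)=\min\{C_1,S_3(t)\}$. Downstream data: $N^{\Delta_A}_{down}(t)=\int_0^t\mathcal{S}^1_3(\tau)u_1(\tau)\,d\tau$ (on-and-off model) and $N^0_{down}(t)=\int_0^t\eta_1\mathcal{S}^1_3(\tau)\,d\tau$ (continuum model). *)

theory Defs
  imports "HOL-Analysis.Analysis"
begin

definition fstar :: "(real \<Rightarrow> real) \<Rightarrow> real \<Rightarrow> real \<Rightarrow> real" where
  "fstar f rhoj u = (SUP rho\<in>{0..rhoj}. f rho - u * rho)"

definition valcond ::
  "real \<Rightarrow> real \<Rightarrow> real \<Rightarrow> (real \<Rightarrow> real) \<Rightarrow> (real \<Rightarrow> real) \<Rightarrow> (real \<Rightarrow> real)
    \<Rightarrow> real \<Rightarrow> real \<Rightarrow> ereal" where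
  "valcond a b T Nini Nup Ndown s y =
     min (if s = 0 \<and> y \<in> {a..b} then ereal (Nini y) else \<infinity>)
      (min (if y = a \<and> s \<in> {0..T} then ereal (Nup s) else \<infinity>)
           (if y = b \<and> s \<in> {0..T} then ereal (Ndown s) else \<infinity>))"

definition laxhopf ::
  "(real \<Rightarrow> real) \<Rightarrow> real \<Rightarrow> real \<Rightarrow> real \<Rightarrow> real \<Rightarrow> real \<Rightarrow> real
    \<Rightarrow> (real \<Rightarrow> real) \<Rightarrow> (real \<Rightarrow> real) \<Rightarrow> (real \<Rightarrow> real) \<Rightarrow> real \<Rightarrow> real \<Rightarrow> ereal" where
  "laxhopf f rhoj v w a b T Nini Nup Ndown t x =
     (INF p\<in>{(u, tau). u \<in> {-w..v} \<and> 0 \<le> tau}.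
        valcond a b T Nini Nup Ndown (t - snd p) (x - snd p * fst p)
        + ereal (snd p * fstar f rhoj (fst p)))"

definition signal :: "real \<Rightarrow> real \<Rightarrow> real \<Rightarrow> real \<Rightarrow> real" where
  "signal Delta eta theta t = (if Delta * frac ((t - theta) / Delta) < eta * Delta then 1 else 0)"

end

theory Submission
  imports Defs
begin

definition tri :: "real \<Rightarrow> real \<Rightarrow> real" where
  "tri eta y = min (frac y) eta - eta * frac y"

lemma tri_bounds:
  assumes "0 < eta" "eta < 1"
  shows "0 \<le> tri eta y \<and> tri eta y \<le> eta * (1 - eta)"
proof -
  have f: "0 \<le> frac y" "frac y < 1" by (auto simp: frac_lt_1)
  show ?thesis
  proof (cases "frac y \<le> eta")
    case True
    have a: "(1-eta)*frac y \<le> (1-eta)*eta" using True assms by (intro mult_left_mono) auto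
    have b: "0 \<le> (1-eta)*frac y" using f assms by simp
    show ?thesis unfolding tri_def using True a b by (simp add: algebra_simps)
  next
    case False
    have a: "eta*(1-frac y) \<le> eta*(1-eta)" using False assms by (intro mult_left_mono) auto
    have b: "0 \<le> eta*(1-frac y)" using f assms by simp
    show ?thesis unfolding tri_def using False a b by (simp add: algebra_simps)
  qed
qed

lemma frac_on_interval:
  assumes "of_int n < z" "z < of_int n + 1"
  shows "frac z = z - of_int n"
proof -
  have "floor z = n" using assms by (simp add: floor_eq_iff)
  then show ?thesis by (simp add: frac_def)
qed

lemma tri_cont:
  assumes "0 < eta" "eta < 1"
  shows "isCont (tri eta) y"
proof (cases "y \<in> \<int>")
  case False
  have "isCont frac y" using continuous_frac[OF False] .
  then show ?thesis unfolding tri_def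
    by (intro continuous_intros)
next
  case True
  then obtain n where n: "y = of_int n" by (auto elim: Ints_cases)
  have ty: "tri eta y = 0" using n assms by (simp add: tri_def)
  have r: "((tri eta) \<longlongrightarrow> 0) (at_right y)"
  proof -
    have ev: "eventually (\<lambda>z. z \<in> {y<..<y+eta}) (at_right y)"
      using assms by (intro eventually_at_right_real) simp
    have "eventually (\<lambda>z. (1 - eta) * (z - y) = tri eta z) (at_right y)"
    proof (rule eventually_mono[OF ev])
      fix z assume z: "z \<in> {y<..<y+eta}"
      then have "frac z = z - of_int n" using n assms by (intro frac_on_interval) auto
      then have "frac z = z - y" using n by simp
      then show "(1 - eta) * (z - y) = tri eta z" using z unfolding tri_def
        by (simp only:) (simp add: min_def algebra_simps)
    qed
    moreover have "((\<lambda>z. (1 - eta) * (z - y)) \<longlongrightarrow> 0) (at_right y)"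
      by (rule tendsto_eq_intros refl | simp)+
    ultimately show ?thesis using Lim_transform_eventually by blast
  qed
  have l: "((tri eta) \<longlongrightarrow> 0) (at_left y)"
  proof -
    have ev: "eventually (\<lambda>z. z \<in> {y-(1-eta)<..<y}) (at_left y)"
      using assms by (intro eventually_at_left_real) simp
    have "eventually (\<lambda>z. eta * (y - z) = tri eta z) (at_left y)"
    proof (rule eventually_mono[OF ev])
      fix z assume z: "z \<in> {y-(1-eta)<..<y}"
      then have "frac z = z - of_int (n - 1)" using n assms by (intro frac_on_interval) auto
      then have fz: "frac z = z - (y - 1)" using n by simp
      then have "eta < frac z" using z by simp
      then show "eta * (y - z) = tri eta z" using z fz unfolding tri_def
        by (simp only:) (simp add: min_def algebra_simps)
    qed
    moreover have "((\<lambda>z. eta * (y - z)) \<longlongrightarrow> 0) (at_left y)"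
      by (rule tendsto_eq_intros refl | simp)+
    ultimately show ?thesis using Lim_transform_eventually by blast
  qed
  show ?thesis unfolding isCont_def ty using r l by (simp add: filterlim_split_at)
qed

lemma signal_has_integral:
  fixes theta Delta eta t :: real
  assumes eta: "0 < eta" "eta < 1" and D: "0 < Delta" and t: "0 \<le> t"
  defines "G \<equiv> \<lambda>s. eta * s + Delta * tri eta ((s - theta) / Delta)"
  shows "(signal Delta eta theta has_integral (G t - G 0)) {0..t}"
proof -
  define Y where "Y = (\<lambda>s::real. (s - theta) / Delta)"
  define S where "S = {s\<in>{0..t}. frac (Y s) = 0 \<or> frac (Y s) = eta}"
  have fin: "finite S"
  proof -
    define K where "K = {floor (Y 0)..floor (Y t)}"
    have "S \<subseteq> (\<lambda>k. theta + Delta * of_int k) ` K \<union> (\<lambda>k. theta + Delta * (of_int k + eta)) ` K"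
    proof
      fix s assume s: "s \<in> S"
      let ?k = "floor (Y s)"
      have s0: "0 \<le> s" "s \<le> t" using s unfolding S_def by auto
      have "Y 0 \<le> Y s" "Y s \<le> Y t" unfolding Y_def
        using divide_right_mono[of "0 - theta" "s - theta" Delta] divide_right_mono[of "s - theta" "t - theta" Delta] s0 D
        by auto
      then have kK: "?k \<in> K" unfolding K_def by (auto intro: floor_mono)
      have se: "s = theta + Delta * (of_int ?k + frac (Y s))" using D unfolding Y_def frac_def by simp
      show "s \<in> (\<lambda>k. theta + Delta * of_int k) ` K \<union> (\<lambda>k. theta + Delta * (of_int k + eta)) ` K"
      proof -
        have "frac (Y s) = 0 \<or> frac (Y s) = eta" using s unfolding S_def by auto
        then show ?thesis
        proof
          assume h: "frac (Y s) = 0"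
          have "s = theta + Delta * of_int ?k" using se by (simp only: h) simp
          then show ?thesis using kK by blast
        next
          assume h: "frac (Y s) = eta"
          have "s = theta + Delta * (of_int ?k + eta)" using se by (simp only: h)
          then show ?thesis using kK by blast
        qed
      qed
    qed
    moreover have "finite K" unfolding K_def by simp
    ultimately show ?thesis by (meson finite_Un finite_imageI finite_subset)
  qed
  have cont: "continuous_on {0..t} G"
  proof (rule continuous_at_imp_continuous_on, rule ballI)
    fix s
    have "isCont (\<lambda>s. tri eta ((s - theta) / Delta)) s"
      by (rule isCont_o2[OF _ tri_cont[OF eta]]) (use D in \<open>intro continuous_intros, auto\<close>)
    then show "isCont G s" unfolding G_def by (intro continuous_intros)
  qed
  have deriv: "(G has_vector_derivative signal Delta eta theta s) (at s)" if s: "s \<in> {0<..<t} - S" for s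
  proof -
    let ?n = "floor (Y s)"
    let ?fr = "frac (Y s)"
    have fr: "?fr \<noteq> 0" "?fr \<noteq> eta" using s unfolding S_def by auto
    have fr0: "0 < ?fr" "?fr < 1" using fr(1) frac_ge_0[of "Y s"] frac_lt_1[of "Y s"] by linarith+
    have se: "s = theta + Delta * (of_int ?n + ?fr)" using D unfolding Y_def frac_def by simp
    have Yz: "of_int ?n < Y z \<and> Y z < of_int ?n + c" 
      if "z \<in> {theta + Delta * of_int ?n <..< theta + Delta * (of_int ?n + c)}" for z c
    proof -
      have "Delta * of_int ?n < z - theta" "z - theta < Delta * (of_int ?n + c)" using that by auto
      then show ?thesis unfolding Y_def using D by (simp add: pos_less_divide_eq pos_divide_less_eq mult.commute)
    qed
    show ?thesis
    proof (cases "?fr < eta")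
      case True
      let ?U = "{theta + Delta * of_int ?n <..< theta + Delta * (of_int ?n + eta)}"
      have a1: "0 < Delta * ?fr" "Delta * ?fr < Delta * eta" using D True fr0 by simp_all
      have se2: "s = theta + Delta * of_int ?n + Delta * ?fr" using se by (simp add: distrib_left)
      have sU: "s \<in> ?U" using a1 se2 unfolding greaterThanLessThan_iff distrib_left by linarith
      have eq: "eta * z + (1 - eta) * (z - theta - Delta * of_int ?n) = G z" if z: "z \<in> ?U" for z
      proof -
        have yz: "of_int ?n < Y z" "Y z < of_int ?n + eta" using Yz[OF z] by auto
        have "frac (Y z) = Y z - of_int ?n" using yz eta by (intro frac_on_interval) auto
        then have "tri eta (Y z) = (1 - eta) * (Y z - of_int ?n)" using yz unfolding tri_def
          by (simp only:) (simp add: min_def algebra_simps)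
        then show ?thesis unfolding G_def Y_def[symmetric] using D by (simp add: Y_def field_simps)
      qed
      have d: "((\<lambda>z. eta * z + (1 - eta) * (z - theta - Delta * of_int ?n)) has_real_derivative 1) (at s)"
        by (rule derivative_eq_intros refl | simp)+
      have sig: "signal Delta eta theta s = 1" unfolding signal_def using True D Y_def by auto
      show ?thesis unfolding sig has_real_derivative_iff_has_vector_derivative[symmetric]
        by (rule has_field_derivative_transform_within_open[OF d _ sU eq]) auto
    next
      case False
      then have gt: "eta < ?fr" using fr(2) by linarith
      let ?U = "{theta + Delta * (of_int ?n + eta) <..< theta + Delta * (of_int ?n + 1)}"
      have a1: "Delta * eta < Delta * ?fr" "Delta * ?fr < Delta * 1" using D gt fr0 by simp_all
      have se2: "s = theta + Delta * of_int ?n + Delta * ?fr" using se by (simp add: distrib_left)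
      have sU: "s \<in> ?U" using a1 se2 unfolding greaterThanLessThan_iff distrib_left by linarith
      have Yz2: "of_int ?n + eta < Y z \<and> Y z < of_int ?n + 1" if "z \<in> ?U" for z
      proof -
        have "Delta * (of_int ?n + eta) < z - theta" "z - theta < Delta * (of_int ?n + 1)" using that by auto
        then show ?thesis unfolding Y_def using D by (simp add: pos_less_divide_eq pos_divide_less_eq mult.commute)
      qed
      have eq: "eta * z + eta * (Delta * (of_int ?n + 1) - (z - theta)) = G z" if z: "z \<in> ?U" for z
      proof -
        have yz: "of_int ?n + eta < Y z" "Y z < of_int ?n + 1" using Yz2[OF z] by auto
        have "frac (Y z) = Y z - of_int ?n" using yz eta by (intro frac_on_interval) auto
        then have "tri eta (Y z) = eta * (of_int ?n + 1 - Y z)" using yz unfolding tri_def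
          by (simp only:) (simp add: min_def algebra_simps)
        then show ?thesis unfolding G_def Y_def[symmetric] using D by (simp add: Y_def field_simps)
      qed
      have d: "((\<lambda>z. eta * z + eta * (Delta * (of_int ?n + 1) - (z - theta))) has_real_derivative 0) (at s)"
        by (rule derivative_eq_intros refl | simp)+
      have sig: "signal Delta eta theta s = 0" unfolding signal_def using gt D Y_def by auto
      show ?thesis unfolding sig has_real_derivative_iff_has_vector_derivative[symmetric]
        by (rule has_field_derivative_transform_within_open[OF d _ sU eq]) auto
    qed
  qed
  show ?thesis
    by (rule fundamental_theorem_of_calculus_interior_strong[OF fin t deriv cont])
qed

lemma min3_add:
  fixes X Y Z1 Z2 E :: ereal
  assumes "Z1 \<le> Z2 + E" "0 \<le> E"
  shows "min X (min Y Z1) \<le> min X (min Y Z2) + E"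
proof -
  have h: "\<And>z::ereal. z \<le> z + E" using assms(2)
    by (metis add.right_neutral add_left_mono)
  have "min X (min Y Z1) \<le> X + E" using h[of X] by (meson min.coboundedI1 order_trans)
  moreover have "min X (min Y Z1) \<le> Y + E" using h[of Y] by (meson min.coboundedI1 min.coboundedI2 order_trans)
  moreover have "min X (min Y Z1) \<le> Z2 + E" using assms(1) by (meson min.coboundedI2 order_trans)
  ultimately show ?thesis
    by (metis min_def)
qed

lemma valcond_mono:
  assumes "\<forall>s\<in>{0..T}. D1 s \<le> D2 s + e" "0 \<le> e"
  shows "valcond a b T Nini Nup D1 s y \<le> valcond a b T Nini Nup D2 s y + ereal e"
proof -
  have "(if y = b \<and> s \<in> {0..T} then ereal (D1 s) else \<infinity>) \<le> (if y = b \<and> s \<in> {0..T} then ereal (D2 s) else \<infinity>) + ereal e"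
    using assms(1) by auto
  then show ?thesis unfolding valcond_def
    by (rule min3_add) (simp add: assms(2))
qed

lemma laxhopf_mono:
  assumes "\<forall>s\<in>{0..T}. D1 s \<le> D2 s + e" "0 \<le> e"
  shows "laxhopf f rhoj v w a b T Nini Nup D1 t x \<le> laxhopf f rhoj v w a b T Nini Nup D2 t x + ereal e"
proof -
  let ?I = "{(u, tau). u \<in> {-w..v} \<and> 0 \<le> tau}"
  let ?g1 = "\<lambda>p. valcond a b T Nini Nup D1 (t - snd p) (x - snd p * fst p) + ereal (snd p * fstar f rhoj (fst p))"
  let ?g2 = "\<lambda>p. valcond a b T Nini Nup D2 (t - snd p) (x - snd p * fst p) + ereal (snd p * fstar f rhoj (fst p))"
  have "\<And>p::real\<times>real. p \<in> ?I \<Longrightarrow> (INF q\<in>?I. ?g1 q) - ereal e \<le> ?g2 p"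
  proof -
    fix p :: "real \<times> real" assume p: "p \<in> ?I"
    have "(INF q\<in>?I. ?g1 q) \<le> ?g1 p" by (rule INF_lower[OF p])
    also have "\<dots> \<le> ?g2 p + ereal e"
      using valcond_mono[OF assms, of a b Nini Nup "t - snd p" "x - snd p * fst p"]
      by (metis (no_types, lifting) add.commute add.left_commute add_left_mono)
    finally show "(INF q\<in>?I. ?g1 q) - ereal e \<le> ?g2 p"
      by (simp add: ereal_minus_le_iff)
  qed
  then have "(INF q\<in>?I. ?g1 q) - ereal e \<le> (INF q\<in>?I. ?g2 q)" by (rule INF_greatest)
  then show ?thesis unfolding laxhopf_def by (simp add: ereal_minus_le_iff)
qed
theorem theorem4p3:
  fixes f :: "real \<Rightarrow> real" and rhoj C v w :: real
    and a1 b1 T C1 C3 eta1 DeltaA :: real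
    and Nini Nup S3 u1 :: "real \<Rightarrow> real"
  assumes rhoj_pos: "0 < rhoj"
    and f_cont: "continuous_on {0..rhoj} f"
    and f_concave: "concave_on {0..rhoj} f"
    and f_0: "f 0 = 0" and f_rhoj: "f rhoj = 0"
    and f_range: "f ` {0..rhoj} \<subseteq> {0..C}"
    and C_max: "C = (SUP rho\<in>{0..rhoj}. f rho)"
    and v_deriv: "(f has_real_derivative v) (at_right 0)"
    and w_deriv: "(f has_real_derivative (- w)) (at_left rhoj)"
    and link: "a1 < b1"
    and C1_pos: "0 < C1" and C3_pos: "0 < C3"
    and eta1: "0 < eta1" "eta1 < 1"
    and Delta_pos: "0 < DeltaA"
    and u1_signal: "\<exists>theta. \<forall>t\<in>{0..T}. u1 t = signal DeltaA eta1 theta t"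
    and no_spillback: "\<forall>t. S3 t = C3"
  shows "(\<forall>t\<in>{0..T}. \<forall>x\<in>{a1..b1}.
            laxhopf f rhoj v w a1 b1 T Nini Nup
               (\<lambda>t. integral {0..t} (\<lambda>s. min C1 (S3 s) * u1 s)) t x
             \<le> laxhopf f rhoj v w a1 b1 T Nini Nup
               (\<lambda>t. integral {0..t} (\<lambda>s. eta1 * min C1 (S3 s))) t x
               + ereal (eta1 * (1 - eta1) * DeltaA * min C1 C3)
          \<and> laxhopf f rhoj v w a1 b1 T Nini Nup
               (\<lambda>t. integral {0..t} (\<lambda>s. eta1 * min C1 (S3 s))) t x
             \<le> laxhopf f rhoj v w a1 b1 T Nini Nup
               (\<lambda>t. integral {0..t} (\<lambda>s. min C1 (S3 s) * u1 s)) t x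
               + ereal (eta1 * (1 - eta1) * DeltaA * min C1 C3))
     \<and> eta1 * (1 - eta1) * DeltaA * min C1 C3 \<le> DeltaA * min C1 C3 / 4"
  proof -
  obtain theta where th: "\<forall>t\<in>{0..T}. u1 t = signal DeltaA eta1 theta t" using u1_signal by blast
  define c where "c = min C1 C3"
  define e where "e = eta1 * (1 - eta1) * DeltaA * c"
  have c_pos: "0 < c" using C1_pos C3_pos unfolding c_def by simp
  have e_nn: "0 \<le> e" unfolding e_def using eta1 Delta_pos c_pos by simp
  define G where "G = (\<lambda>s. eta1 * s + DeltaA * tri eta1 ((s - theta) / DeltaA))"
  have key: "\<bar>integral {0..s} (\<lambda>s. min C1 (S3 s) * u1 s) - integral {0..s} (\<lambda>s. eta1 * min C1 (S3 s))\<bar> \<le> e"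
    if s: "s \<in> {0..T}" for s
  proof -
    have hi: "(signal DeltaA eta1 theta has_integral (G s - G 0)) {0..s}"
      unfolding G_def using signal_has_integral[OF eta1 Delta_pos, of s theta] s by simp
    have "((\<lambda>r. c * signal DeltaA eta1 theta r) has_integral c * (G s - G 0)) {0..s}"
      by (rule has_integral_mult_right[OF hi])
    then have i1: "integral {0..s} (\<lambda>r. c * signal DeltaA eta1 theta r) = c * (G s - G 0)"
      by (rule integral_unique)
    have "integral {0..s} (\<lambda>s. min C1 (S3 s) * u1 s) = integral {0..s} (\<lambda>r. c * signal DeltaA eta1 theta r)"
      by (rule integral_cong) (use th s no_spillback in \<open>auto simp: c_def\<close>)
    then have I1: "integral {0..s} (\<lambda>s. min C1 (S3 s) * u1 s) = c * (G s - G 0)" using i1 by simp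
    have I2: "integral {0..s} (\<lambda>s. eta1 * min C1 (S3 s)) = c * (eta1 * s)"
      using s no_spillback by (simp add: c_def)
    have diff: "c * (G s - G 0) - c * (eta1 * s) = c * DeltaA * (tri eta1 ((s - theta) / DeltaA) - tri eta1 ((0 - theta) / DeltaA))"
      unfolding G_def by (simp add: algebra_simps)
    have b1: "0 \<le> tri eta1 ((s - theta) / DeltaA)" "tri eta1 ((s - theta) / DeltaA) \<le> eta1 * (1 - eta1)"
      "0 \<le> tri eta1 ((0 - theta) / DeltaA)" "tri eta1 ((0 - theta) / DeltaA) \<le> eta1 * (1 - eta1)"
      using tri_bounds[OF eta1] by auto
    have "\<bar>tri eta1 ((s - theta) / DeltaA) - tri eta1 ((0 - theta) / DeltaA)\<bar> \<le> eta1 * (1 - eta1)"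
      using b1 by linarith
    then have "c * DeltaA * \<bar>tri eta1 ((s - theta) / DeltaA) - tri eta1 ((0 - theta) / DeltaA)\<bar> \<le> c * DeltaA * (eta1 * (1 - eta1))"
      using c_pos Delta_pos by (intro mult_left_mono) auto
    moreover have "\<bar>c * DeltaA * (tri eta1 ((s - theta) / DeltaA) - tri eta1 ((0 - theta) / DeltaA))\<bar>
       = c * DeltaA * \<bar>tri eta1 ((s - theta) / DeltaA) - tri eta1 ((0 - theta) / DeltaA)\<bar>"
      using c_pos Delta_pos by (simp add: abs_mult)
    moreover have "c * DeltaA * (eta1 * (1 - eta1)) = e" by (simp add: e_def)
    ultimately show ?thesis unfolding I1 I2 diff by linarith
  qed
  have A: "\<forall>s\<in>{0..T}. integral {0..s} (\<lambda>s. min C1 (S3 s) * u1 s) \<le> integral {0..s} (\<lambda>s. eta1 * min C1 (S3 s)) + e" (is "\<forall>s\<in>_. ?P s")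
  proof
    fix s assume "s \<in> {0..T}"
    from key[OF this] show "?P s" unfolding abs_le_iff by linarith
  qed
  have B: "\<forall>s\<in>{0..T}. integral {0..s} (\<lambda>s. eta1 * min C1 (S3 s)) \<le> integral {0..s} (\<lambda>s. min C1 (S3 s) * u1 s) + e" (is "\<forall>s\<in>_. ?Q s")
  proof
    fix s assume "s \<in> {0..T}"
    from key[OF this] show "?Q s" unfolding abs_le_iff by linarith
  qed
  have q: "eta1 * (1 - eta1) \<le> 1/4"
  proof -
    have "0 \<le> (eta1 - 1/2)^2" by simp
    then show ?thesis by (simp add: power2_eq_square algebra_simps)
  qed
  have "eta1 * (1 - eta1) * (DeltaA * c) \<le> 1/4 * (DeltaA * c)"
    using q Delta_pos c_pos by (intro mult_right_mono) auto
  then have fin: "eta1 * (1 - eta1) * DeltaA * min C1 C3 \<le> DeltaA * min C1 C3 / 4"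
    unfolding c_def by (simp add: algebra_simps)
  show ?thesis
    using laxhopf_mono[OF A e_nn] laxhopf_mono[OF B e_nn] fin unfolding e_def c_def by auto
qed

end
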